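(* Let $L$ be a rotational virtual link diagram. Then $L$ bounds a rotational virtual surface if and only if $L$ has an even number of virtual crossings.
   Context: A virtual link diagram is a diagram in the plane with classical crossings (over/under) and virtual crossings (drawn encircled). Rotational virtual equivalence is the equivalence relation on such diagrams generated by planar isotopy, the classical Reidemeister moves, and the virtual moves (virtual second and third Reidemeister moves, and the mixed move in which a strand with two virtual crossings passes over or under a classical crossing), but NOT the virtual first Reidemeister move (a virtual curl may not be added or removed); equivalently the detour move is restricted so that arcs with only virtual crossings are moved by regular homotopy in the plane (so, e.g., two opposite virtual curls can be created or cancelled via the Whitney trick, but a single one cannot). A free circle is a closed curve with no crossings (in particular no virtual crossings). Rotational virtual cobordism is the equivalence generated by rotational virtual equivalence, births (introducing an isolated free circle), deaths (removing an isolated free circle) and oriented saddle moves (bringing two oppositely oriented arcs together and resmoothing them into two new oppositely oriented arcs). $L$ bounds a rotational virtual surface if there is a sequence of such moves starting at $L$ and ending at the empty diagram. *)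

theory Defs
  imports Main
begin

text \<open>
  Combinatorial model of (oriented) virtual link diagrams in the plane, in Morse position.
  A diagram is read from bottom to top as a word of elementary horizontal slices.
  The state between two slices is the list of orientations of the strands met by a
  horizontal line (True = strand oriented upwards, False = downwards), from left to right.
  A slice (k, g) acts on the strands with k strands to its left:
    Min b : a local minimum (cup) creating two new strands oriented [b, not b];
    Max   : a local maximum (cap) joining two adjacent oppositely oriented strands;
    Cr t  : a crossing of strands k and k+1; t = Over (resp. Under) means the strand entering
            at the bottom-left passes over (resp. under); t = Virt is a virtual crossing.
\<close>

datatype ctype = Over | Under | Virt

datatype gen = Min bool | Max | Cr ctype

type_synonym slice = "nat \<times> gen"
type_synonym mword = "slice list"

fun flipc :: "ctype \<Rightarrow> ctype" where
  "flipc Over = Under"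
| "flipc Under = Over"
| "flipc Virt = Virt"

fun n_in :: "gen \<Rightarrow> nat" where
  "n_in (Min b) = 0"
| "n_in Max = 2"
| "n_in (Cr t) = 2"

fun n_out :: "gen \<Rightarrow> nat" where
  "n_out (Min b) = 2"
| "n_out Max = 0"
| "n_out (Cr t) = 2"

fun apply_slice :: "bool list \<Rightarrow> slice \<Rightarrow> bool list option" where
  "apply_slice xs (k, Min b) =
     (if k \<le> length xs then Some (take k xs @ [b, \<not> b] @ drop k xs) else None)"
| "apply_slice xs (k, Max) =
     (if k + 2 \<le> length xs \<and> xs ! (k+1) = (\<not> xs ! k)
      then Some (take k xs @ drop (k+2) xs) else None)"
| "apply_slice xs (k, Cr t) =
     (if k + 2 \<le> length xs
      then Some (take k xs @ [xs ! (k+1), xs ! k] @ drop (k+2) xs) else None)"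

fun typed :: "bool list \<Rightarrow> mword \<Rightarrow> bool list option" where
  "typed xs [] = Some xs"
| "typed xs (s # w) = (case apply_slice xs s of None \<Rightarrow> None | Some ys \<Rightarrow> typed ys w)"

definition closed_diagram :: "mword \<Rightarrow> bool" where
  "closed_diagram D \<longleftrightarrow> typed [] D = Some []"

definition num_virtual :: "mword \<Rightarrow> nat" where
  "num_virtual D = length (filter (\<lambda>s. snd s = Cr Virt) D)"

text \<open>Local relations generating rotational virtual equivalence (each applied in context,
  between words with the same source and target state).  NO virtual R1.\<close>

inductive rv_local :: "mword \<Rightarrow> mword \<Rightarrow> bool" where
  interchange_r: "b \<ge> a + n_out g1 \<Longrightarrow>
     rv_local [(a, g1), (b, g2)] [(b - n_out g1 + n_in g1, g2), (a, g1)]"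
| interchange_l: "b + n_in g2 \<le> a \<Longrightarrow>
     rv_local [(a, g1), (b, g2)] [(b, g2), (a - n_in g2 + n_out g2, g1)]"
| zigzag1: "rv_local [(i, Min b), (Suc i, Max)] []"
| zigzag2: "rv_local [(Suc i, Min b), (i, Max)] []"
| rotate1: "rv_local [(i+2, Min b), (i+1, Cr t), (i, Max)] [(i, Cr (flipc t))]"
| rotate2: "rv_local [(i, Min b), (i+1, Cr t), (i+2, Max)] [(i, Cr (flipc t))]"
| slide_max1: "rv_local [(i+1, Cr t), (i, Cr t), (i+1, Max)] [(i, Max)]"
| slide_max2: "rv_local [(i, Cr t), (i+1, Cr t), (i, Max)] [(i+1, Max)]"
| slide_min1: "rv_local [(i+1, Min b), (i, Cr t), (i+1, Cr t)] [(i, Min b)]"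
| slide_min2: "rv_local [(i, Min b), (i+1, Cr t), (i, Cr t)] [(i+1, Min b)]"
| R1a: "t \<noteq> Virt \<Longrightarrow> rv_local [(i+1, Min b), (i, Cr t), (i+1, Max)] []"
| R1b: "t \<noteq> Virt \<Longrightarrow> rv_local [(i, Min b), (i+1, Cr t), (i, Max)] []"
| R2a: "rv_local [(i, Cr Over), (i, Cr Under)] []"
| R2b: "rv_local [(i, Cr Under), (i, Cr Over)] []"
| R3: "rv_local [(i, Cr t), (i+1, Cr t), (i, Cr t)] [(i+1, Cr t), (i, Cr t), (i+1, Cr t)]"
| VR2: "rv_local [(i, Cr Virt), (i, Cr Virt)] []"
| mixed1: "rv_local [(i, Cr Virt), (i+1, Cr Virt), (i, Cr t)]
                    [(i+1, Cr t), (i, Cr Virt), (i+1, Cr Virt)]"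
| mixed2: "rv_local [(i+1, Cr Virt), (i, Cr Virt), (i+1, Cr t)]
                    [(i, Cr t), (i+1, Cr Virt), (i, Cr Virt)]"

text \<open>Additional local relations for rotational virtual cobordism:
  birth/death of a free circle, and the oriented saddle on two adjacent oppositely
  oriented strands.\<close>

inductive cob_local :: "mword \<Rightarrow> mword \<Rightarrow> bool" where
  rv: "rv_local l r \<Longrightarrow> cob_local l r"
| birth: "cob_local [] [(i, Min b), (i, Max)]"
| saddle: "cob_local [] [(i, Max), (i, Min b)]"

definition in_context :: "(mword \<Rightarrow> mword \<Rightarrow> bool) \<Rightarrow> mword \<Rightarrow> mword \<Rightarrow> bool" where
  "in_context R D D' \<longleftrightarrow>
     (\<exists>u l r v xs ys. D = u @ l @ v \<and> D' = u @ r @ v \<and>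
        typed [] u = Some xs \<and> typed xs l = Some ys \<and> typed xs r = Some ys \<and>
        (R l r \<or> R r l))"

definition rv_equivalent :: "mword \<Rightarrow> mword \<Rightarrow> bool" where
  "rv_equivalent = (in_context rv_local)\<^sup>*\<^sup>*"

definition rv_cobordant :: "mword \<Rightarrow> mword \<Rightarrow> bool" where
  "rv_cobordant = (in_context cob_local)\<^sup>*\<^sup>*"

definition bounds_rv_surface :: "mword \<Rightarrow> bool" where
  "bounds_rv_surface D \<longleftrightarrow> rv_cobordant D []"

end

theory Submission
  imports Defs
begin


lemma typed_append: "typed xs (u@v) = (case typed xs u of None \<Rightarrow> None | Some ys \<Rightarrow> typed ys v)"
  by (induction u arbitrary: xs) (auto split: option.splits)

definition step :: "bool list \<Rightarrow> mword \<Rightarrow> mword \<Rightarrow> bool" where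
 "step xs D D' \<longleftrightarrow> (\<exists>u l r v ys zs. D = u@l@v \<and> D' = u@r@v \<and> typed xs u = Some ys \<and>
     typed ys l = Some zs \<and> typed ys r = Some zs \<and> (cob_local l r \<or> cob_local r l))"

abbreviation E where "E xs \<equiv> (step xs)\<^sup>*\<^sup>*"

lemma step_sym: "step xs D D' \<Longrightarrow> step xs D' D"
  unfolding step_def by blast

lemma E_sym: "E xs D D' \<Longrightarrow> E xs D' D"
proof (induction rule: rtranclp_induct)
  case base then show ?case by simp
next
  case (step y z) then show ?case
    by (meson converse_rtranclp_into_rtranclp step_sym)
qed

lemma step_ctx: "step xs w w' \<Longrightarrow> typed x0 p = Some xs \<Longrightarrow> step x0 (p@w@q) (p@w'@q)"
  unfolding step_def
  apply (elim exE conjE)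
  subgoal for u l r v ys zs
    apply (rule exI[of _ "p@u"], rule exI[of _ l], rule exI[of _ r], rule exI[of _ "v@q"])
    apply (auto simp: typed_append)
    done
  done

lemma E_ctx: "E xs w w' \<Longrightarrow> typed x0 p = Some xs \<Longrightarrow> E x0 (p@w@q) (p@w'@q)"
proof (induction rule: rtranclp_induct)
  case base then show ?case by simp
next
  case (step y z) then show ?case
    by (meson rtranclp.rtrancl_into_rtrancl step_ctx)
qed

lemma step_local: "typed xs l = Some zs \<Longrightarrow> typed xs r = Some zs \<Longrightarrow> cob_local l r \<or> cob_local r l \<Longrightarrow> step xs l r"
  unfolding step_def
  apply (rule exI[of _ "[]"], rule exI[of _ l], rule exI[of _ r], rule exI[of _ "[]"])
  by auto

lemma step_typed: "step xs w w' \<Longrightarrow> typed xs w = typed xs w'"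
  unfolding step_def by (auto simp: typed_append split: option.splits)

lemma E_typed: "E xs w w' \<Longrightarrow> typed xs w = typed xs w'"
  by (induction rule: rtranclp_induct) (auto dest: step_typed)

definition shift :: "nat \<Rightarrow> mword \<Rightarrow> mword" where
  "shift n w = map (\<lambda>(k,g). (k+n,g)) w"

lemma shift_simps[simp]: "shift n [] = []" "shift n ((k,g)#w) = (k+n,g) # shift n w"
  "shift n (u@v) = shift n u @ shift n v"
  by (auto simp: shift_def)

lemma apply_slice_shift: "apply_slice xs (k,g) = Some ys \<Longrightarrow>
   apply_slice (L@xs@R) (k + length L, g) = Some (L@ys@R)"
  by (cases g) (auto simp: nth_append split: if_splits)


lemma typed_shift: "typed xs w = Some ys \<Longrightarrow> typed (L@xs@R) (shift (length L) w) = Some (L@ys@R)"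
proof (induction w arbitrary: xs)
  case Nil then show ?case by simp
next
  case (Cons s w)
  obtain k g where s: "s = (k,g)" by fastforce
  from Cons.prems obtain zs where z: "apply_slice xs (k,g) = Some zs" and t: "typed zs w = Some ys"
    by (auto simp: s split: option.splits)
  show ?case using apply_slice_shift[OF z, of L R] Cons.IH[OF t] by (simp add: s)
qed

lemma rv_local_shift: "rv_local l r \<Longrightarrow> rv_local (shift n l) (shift n r)"
proof (induction rule: rv_local.induct)
  case (interchange_r b a g1 g2)
  have e: "b - n_out g1 + n_in g1 + n = (b + n) - n_out g1 + n_in g1" using interchange_r by simp
  have "rv_local [(a+n,g1),(b+n,g2)] [((b+n) - n_out g1 + n_in g1, g2),(a+n,g1)]"
    by (rule rv_local.interchange_r) (use interchange_r in simp)
  then show ?case by (simp only: shift_simps e)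
next
  case (interchange_l b g2 a g1)
  have e: "a - n_in g2 + n_out g2 + n = (a + n) - n_in g2 + n_out g2" using interchange_l by simp
  have "rv_local [(a+n,g1),(b+n,g2)] [(b+n, g2),((a+n) - n_in g2 + n_out g2,g1)]"
    by (rule rv_local.interchange_l) (use interchange_l in simp)
  then show ?case by (simp only: shift_simps e)
next
  case (zigzag1 i b) then show ?case using rv_local.zigzag1[of "i+n" b] by simp
next
  case (zigzag2 i b) then show ?case using rv_local.zigzag2[of "i+n" b] by simp
next
  case (rotate1 i b t) then show ?case using rv_local.rotate1[of "i+n" b t] by (simp add: ac_simps)
next
  case (rotate2 i b t) then show ?case using rv_local.rotate2[of "i+n" b t] by (simp add: ac_simps)
next
  case (slide_max1 i t) then show ?case using rv_local.slide_max1[of "i+n" t] by (simp add: ac_simps)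
next
  case (slide_max2 i t) then show ?case using rv_local.slide_max2[of "i+n" t] by (simp add: ac_simps)
next
  case (slide_min1 i b t) then show ?case using rv_local.slide_min1[of "i+n" b t] by (simp add: ac_simps)
next
  case (slide_min2 i b t) then show ?case using rv_local.slide_min2[of "i+n" b t] by (simp add: ac_simps)
next
  case (R1a t i b) then show ?case using rv_local.R1a[of t "i+n" b] by (simp add: ac_simps)
next
  case (R1b t i b) then show ?case using rv_local.R1b[of t "i+n" b] by (simp add: ac_simps)
next
  case (R2a i) then show ?case using rv_local.R2a[of "i+n"] by simp
next
  case (R2b i) then show ?case using rv_local.R2b[of "i+n"] by simp
next
  case (R3 i t) then show ?case using rv_local.R3[of "i+n" t] by (simp add: ac_simps)
next
  case (VR2 i) then show ?case using rv_local.VR2[of "i+n"] by simp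
next
  case (mixed1 i t) then show ?case using rv_local.mixed1[of "i+n" t] by (simp add: ac_simps)
next
  case (mixed2 i t) then show ?case using rv_local.mixed2[of "i+n" t] by (simp add: ac_simps)
qed

lemma cob_local_shift: "cob_local l r \<Longrightarrow> cob_local (shift n l) (shift n r)"
proof (induction rule: cob_local.induct)
  case (rv l r) then show ?case by (simp add: cob_local.rv rv_local_shift)
next
  case (birth i b) then show ?case using cob_local.birth[of "i+n" b] by simp
next
  case (saddle i b) then show ?case using cob_local.saddle[of "i+n" b] by simp
qed

lemma step_shift: "step xs w w' \<Longrightarrow> step (L@xs@R) (shift (length L) w) (shift (length L) w')"
  unfolding step_def
  apply (elim exE conjE)
  subgoal for u l r v ys zs
    apply (rule exI[of _ "shift (length L) u"], rule exI[of _ "shift (length L) l"],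
           rule exI[of _ "shift (length L) r"], rule exI[of _ "shift (length L) v"],
           rule exI[of _ "L@ys@R"], rule exI[of _ "L@zs@R"])
    apply (auto simp: typed_shift cob_local_shift)
    done
  done

lemma E_shift: "E xs w w' \<Longrightarrow> E (L@xs@R) (shift (length L) w) (shift (length L) w')"
  by (induction rule: rtranclp_induct) (auto intro: rtranclp.rtrancl_into_rtrancl step_shift)




section \<open>Parity\<close>

lemma nv_append[simp]: "num_virtual (u@v) = num_virtual u + num_virtual v"
  by (simp add: num_virtual_def)

lemma nv_simps[simp]: "num_virtual [] = 0" "num_virtual ((k,g)#w) = (if g = Cr Virt then Suc (num_virtual w) else num_virtual w)"
  by (auto simp: num_virtual_def)

lemma flipc_virt[simp]: "(flipc t = Virt) = (t = Virt)"
  by (cases t) auto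

lemma rv_parity: "rv_local l r \<Longrightarrow> even (num_virtual l) = even (num_virtual r)"
  by (induction rule: rv_local.induct) (simp_all)

lemma cob_parity: "cob_local l r \<Longrightarrow> even (num_virtual l) = even (num_virtual r)"
  by (induction rule: cob_local.induct) (auto simp: rv_parity)

lemma step_parity: "step xs w w' \<Longrightarrow> even (num_virtual w) = even (num_virtual w')"
  unfolding step_def using cob_parity by auto

lemma E_parity: "E xs w w' \<Longrightarrow> even (num_virtual w) = even (num_virtual w')"
  by (induction rule: rtranclp_induct) (auto dest: step_parity)

fun gout :: "gen \<Rightarrow> bool list \<Rightarrow> bool list option" where
  "gout (Min b) M = Some [b, \<not> b]"
| "gout Max M = (if M!1 = (\<not> M!0) then Some [] else None)"
| "gout (Cr t) M = Some [M!1, M!0]"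

lemma gout_len: "gout g M = Some Ou \<Longrightarrow> length Ou = n_out g"
  by (cases g) (auto split: if_splits)

lemma len2: "length M = 2 \<Longrightarrow> \<exists>x y. M = [x,y]"
  by (metis One_nat_def Suc_1 length_0_conv length_Suc_conv)

lemma apply_slice_at: assumes "length A = k" "length M = n_in g" shows
   "apply_slice (A@M@Z) (k,g) = map_option (\<lambda>Ou. A@Ou@Z) (gout g M)"
proof (cases g)
  case (Min b) then show ?thesis using assms by (auto)
next
  case Max
  then obtain x y where "M = [x,y]" using assms len2[of M] by auto
  then show ?thesis using Max assms by (auto simp: nth_append)
next
  case (Cr t)
  then obtain x y where "M = [x,y]" using assms len2[of M] by auto
  then show ?thesis using Cr assms by (auto simp: nth_append)
qed

lemma apply_slice_len: "apply_slice xs (k,g) = Some ys \<Longrightarrow> k + n_in g \<le> length xs"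
  by (cases g) (auto split: if_splits)

lemma split3: "k + n \<le> length xs \<Longrightarrow> \<exists>A M Z. xs = A@M@Z \<and> length A = k \<and> length M = n"
  apply (rule exI[of _ "take k xs"], rule exI[of _ "take n (drop k xs)"], rule exI[of _ "drop (k+n) xs"])
  using drop_drop[of n k xs] append_take_drop_id[of k xs] append_take_drop_id[of n "drop k xs"]
  by (simp add: add.commute)


lemma typed2: "typed xs [s1,s2] = Some ys \<longleftrightarrow> (\<exists>zs. apply_slice xs s1 = Some zs \<and> apply_slice zs s2 = Some ys)"
  by (auto split: option.splits)

lemma ic_l: assumes "b + n_in g2 \<le> a" "typed xs [(a,g1),(b,g2)] = Some ys"
  shows "typed xs [(b,g2),(a - n_in g2 + n_out g2, g1)] = Some ys"
proof -
  from typed2[THEN iffD1, OF assms(2)] obtain ys1 where s1: "apply_slice xs (a,g1) = Some ys1" and s2: "apply_slice ys1 (b,g2) = Some ys"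
    by blast
  from apply_slice_len[OF s1] obtain P M1 Z where xs: "xs = P@M1@Z" "length P = a" "length M1 = n_in g1"
    using split3 by blast
  from assms(1) xs(2) obtain A M2 G where P: "P = A@M2@G" "length A = b" "length M2 = n_in g2"
    using split3[of b "n_in g2" P] by auto
  from s1 have "map_option (\<lambda>Ou. P@Ou@Z) (gout g1 M1) = Some ys1" using apply_slice_at[OF xs(2) xs(3)] xs(1) by simp
  then obtain O1 where o1: "gout g1 M1 = Some O1" "ys1 = A@M2@(G@O1@Z)" using P by auto
  from s2 have "map_option (\<lambda>Ou. A@Ou@(G@O1@Z)) (gout g2 M2) = Some ys" using apply_slice_at[OF P(2) P(3)] o1 by simp
  then obtain O2 where o2: "gout g2 M2 = Some O2" "ys = A@O2@G@O1@Z" by auto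
  have r1: "apply_slice xs (b,g2) = Some ((A@O2@G)@M1@Z)" using apply_slice_at[OF P(2) P(3), of "G@M1@Z"] xs P o2 by simp
  have len: "length (A@O2@G) = a - n_in g2 + n_out g2" using gout_len[OF o2(1)] P xs by simp
  have r2: "apply_slice ((A@O2@G)@M1@Z) (a - n_in g2 + n_out g2, g1) = Some ys"
    using apply_slice_at[OF len xs(3), of Z] o1 o2 by simp
  show ?thesis using r1 r2 typed2 by blast
qed

lemma ic_r: assumes "a + n_out g1 \<le> b" "typed xs [(a,g1),(b,g2)] = Some ys"
  shows "typed xs [(b - n_out g1 + n_in g1, g2),(a,g1)] = Some ys"
proof -
  from typed2[THEN iffD1, OF assms(2)] obtain ys1 where s1: "apply_slice xs (a,g1) = Some ys1" and s2: "apply_slice ys1 (b,g2) = Some ys"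
    by blast
  from apply_slice_len[OF s1] obtain A M1 Z where xs: "xs = A@M1@Z" "length A = a" "length M1 = n_in g1"
    using split3 by blast
  from s1 have "map_option (\<lambda>Ou. A@Ou@Z) (gout g1 M1) = Some ys1" using apply_slice_at[OF xs(2) xs(3)] xs(1) by simp
  then obtain O1 where o1: "gout g1 M1 = Some O1" "ys1 = A@O1@Z" by auto
  have lo1: "length O1 = n_out g1" using gout_len[OF o1(1)] .
  from apply_slice_len[OF s2] o1 lo1 xs assms(1) have "(b - a - n_out g1) + n_in g2 \<le> length Z" by simp
  then obtain G M2 Z2 where Z: "Z = G@M2@Z2" "length G = b - a - n_out g1" "length M2 = n_in g2"
    using split3 by blast
  have lb: "length (A@O1@G) = b" using lo1 Z xs assms(1) by simp
  from s2 have "map_option (\<lambda>Ou. (A@O1@G)@Ou@Z2) (gout g2 M2) = Some ys" using apply_slice_at[OF lb Z(3)] o1 Z by simp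
  then obtain O2 where o2: "gout g2 M2 = Some O2" "ys = A@O1@G@O2@Z2" by auto
  have lb2: "length (A@M1@G) = b - n_out g1 + n_in g1" using lo1 Z xs assms(1) by simp
  have r1: "apply_slice xs (b - n_out g1 + n_in g1, g2) = Some (A@M1@G@O2@Z2)"
    using apply_slice_at[OF lb2 Z(3), of Z2] xs Z o2 by simp
  have r2: "apply_slice (A@M1@(G@O2@Z2)) (a, g1) = Some ys"
    using apply_slice_at[OF xs(2) xs(3), of "G@O2@Z2"] o1 o2 by simp
  show ?thesis using r1 r2 typed2 by blast
qed


lemma E_in: "typed x0 p = Some xs \<Longrightarrow> typed xs l = Some ys \<Longrightarrow> typed xs r = Some ys \<Longrightarrow>
   cob_local l r \<or> cob_local r l \<Longrightarrow> E x0 (p@l@q) (p@r@q)"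
  by (meson r_into_rtranclp step_ctx step_local)

lemma typed_death: "typed xs [(a,Min b),(a,Max)] = Some ys \<Longrightarrow> ys = xs"
  by (auto split: option.splits if_splits)

lemma typed_z1: assumes "typed xs [(a,Min b),(Suc a,Max)] = Some ys" shows "ys = xs"
proof -
  from assms have "a \<le> length xs" by (auto split: option.splits if_splits)
  then obtain A Z where xs: "xs = A@Z" "length A = a" using split3[of a 0 xs] by auto
  show ?thesis using assms xs
    by (cases Z) (auto split: option.splits if_splits simp: nth_append)
qed

lemma typed_z2: assumes "typed xs [(Suc a,Min b),(a,Max)] = Some ys" shows "ys = xs"
proof -
  from assms have "Suc a \<le> length xs" by (auto split: option.splits if_splits)
  then obtain A M Z where xs: "xs = A@M@Z" "length A = a" "length M = 1" using split3[of a 1 xs] by auto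
  then obtain z where "M = [z]" by (metis One_nat_def length_0_conv length_Suc_conv)
  then show ?thesis using assms xs
    by (auto split: option.splits if_splits simp: nth_append)
qed

definition cl :: "mword \<Rightarrow> bool" where "cl w \<longleftrightarrow> (\<forall>s\<in>set w. \<forall>t. snd s \<noteq> Cr t)"

lemma cl_simps[simp]: "cl []" "cl (s#w) \<longleftrightarrow> (\<forall>t. snd s \<noteq> Cr t) \<and> cl w" "cl (u@v) \<longleftrightarrow> cl u \<and> cl v"
  by (auto simp: cl_def)

lemma last_min_aux: "(\<exists>s\<in>set w. \<exists>b. snd s = Min b) \<Longrightarrow> cl w \<Longrightarrow>
   \<exists>p a b q. w = p@[(a,Min b)]@q \<and> (\<forall>s\<in>set q. snd s = Max)"
proof (induction w rule: rev_induct)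
  case Nil then show ?case by simp
next
  case (snoc x w)
  obtain k g where x: "x = (k,g)" by fastforce
  show ?case
  proof (cases "\<exists>b. g = Min b")
    case True then obtain b where "g = Min b" by blast
    then show ?thesis using x by (intro exI[of _ w] exI[of _ k] exI[of _ b] exI[of _ "[]"]) auto
  next
    case False
    then have gm: "g = Max" using snoc.prems(2) x by (cases g) auto
    then have "\<exists>s\<in>set w. \<exists>b. snd s = Min b" using snoc.prems(1) x by auto
    then obtain p a b q where "w = p@[(a,Min b)]@q" "\<forall>s\<in>set q. snd s = Max" using snoc by auto
    then show ?thesis using x gm by (intro exI[of _ p] exI[of _ a] exI[of _ b] exI[of _ "q@[x]"]) auto
  qed
qed

lemma typed_allmax: "(\<forall>s\<in>set w. snd s = Max) \<Longrightarrow> w \<noteq> [] \<Longrightarrow> typed [] w = None"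
  by (cases w) auto

lemma cl_null: "cl D \<Longrightarrow> typed [] D = Some [] \<Longrightarrow> E [] D []"
proof (induction "length D" arbitrary: D rule: less_induct)
  case less
  show ?case
  proof (cases "D = []")
    case True then show ?thesis by simp
  next
    case False
    have "\<exists>s\<in>set D. \<exists>b. snd s = Min b"
    proof (rule ccontr)
      assume "\<not> ?thesis"
      then have "\<forall>s\<in>set D. snd s = Max" using less.prems(1) unfolding cl_def
        by (metis gen.exhaust)
      then show False using typed_allmax False less.prems(2) by simp
    qed
    then obtain p a b q where D: "D = p@[(a,Min b)]@q" and q: "\<forall>s\<in>set q. snd s = Max"
      using last_min_aux less.prems(1) by blast
    have "\<forall>p a b. cl p \<longrightarrow> typed [] (p@[(a,Min b)]@q) = Some [] \<longrightarrow> length (p@[(a,Min b)]@q) = length D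
            \<longrightarrow> E [] (p@[(a,Min b)]@q) []"
      using q
    proof (induction q)
      case Nil
      show ?case
      proof (intro allI impI)
        fix p a b assume "typed [] (p @ [(a, gen.Min b)] @ []) = Some []"
        then show "E [] (p @ [(a, gen.Min b)] @ []) []"
          by (auto simp: typed_append split: option.splits if_splits)
      qed
    next
      case (Cons s q')
      obtain c where s: "s = (c, Max)" using Cons.prems by (cases s) auto
      have qm: "\<forall>s\<in>set q'. snd s = Max" using Cons.prems by auto
      show ?case
      proof (intro allI impI)
        fix p a b
        assume clp: "cl p" and ty: "typed [] (p @ [(a, gen.Min b)] @ s # q') = Some []"
          and len: "length (p @ [(a, gen.Min b)] @ s # q') = length D"
        from ty obtain xs where xs: "typed [] p = Some xs" by (auto simp: typed_append split: option.splits)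
        from ty xs obtain ys where l: "typed xs [(a, Min b), (c, Max)] = Some ys" and rest: "typed ys q' = Some []"
          by (auto simp: typed_append s split: option.splits)
        have W: "p @ [(a, gen.Min b)] @ s # q' = p @ [(a, Min b), (c, Max)] @ q'" using s by simp
        show "E [] (p @ [(a, gen.Min b)] @ s # q') []"
        proof -
          consider "c = a" | "c = Suc a" | "a = Suc c" | "a + 2 \<le> c" | "c + 2 \<le> a" by linarith
          then show ?thesis
          proof cases
            case 1
            have "ys = xs" using l 1 typed_death by blast
            then have "E [] (p @ [(a, Min b), (c, Max)] @ q') (p @ [] @ q')"
              using E_in[OF xs l, of "[]"] cob_local.birth[of a b] 1 by auto
            moreover have "E [] (p@q') []"
            proof -
              have "cl (p@q')" using clp qm by (auto simp: cl_def)
              then show ?thesis using less.hyps[of "p@q'"] len xs rest \<open>ys = xs\<close> by (auto simp: typed_append)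
            qed
            ultimately show ?thesis using W by (simp add: rtranclp_trans)
          next
            case 2
            have "ys = xs" using l 2 typed_z1 by blast
            then have "E [] (p @ [(a, Min b), (c, Max)] @ q') (p @ [] @ q')"
              using E_in[OF xs l, of "[]"] rv_local.zigzag1[of a b] 2 cob_local.rv by auto
            moreover have "E [] (p@q') []"
            proof -
              have "cl (p@q')" using clp qm by (auto simp: cl_def)
              then show ?thesis using less.hyps[of "p@q'"] len xs rest \<open>ys = xs\<close> by (auto simp: typed_append)
            qed
            ultimately show ?thesis using W by (simp add: rtranclp_trans)
          next
            case 3
            have "ys = xs" using l 3 typed_z2 by blast
            then have "E [] (p @ [(a, Min b), (c, Max)] @ q') (p @ [] @ q')"
              using E_in[OF xs l, of "[]"] rv_local.zigzag2[of c b] 3 cob_local.rv by auto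
            moreover have "E [] (p@q') []"
            proof -
              have "cl (p@q')" using clp qm by (auto simp: cl_def)
              then show ?thesis using less.hyps[of "p@q'"] len xs rest \<open>ys = xs\<close> by (auto simp: typed_append)
            qed
            ultimately show ?thesis using W by (simp add: rtranclp_trans)
          next
            case 4
            have r: "typed xs [(c - 2, Max), (a, Min b)] = Some ys" using ic_r[of a "Min b" c xs Max ys] l 4 by simp
            have rl: "rv_local [(a, Min b), (c, Max)] [(c - 2, Max), (a, Min b)]"
              using rv_local.interchange_r[of a "Min b" c Max] 4 by simp
            have "E [] (p @ [(a, Min b), (c, Max)] @ q') (p @ [(c - 2, Max), (a, Min b)] @ q')"
              using E_in[OF xs l r] rl cob_local.rv by blast
            moreover have "E [] ((p @ [(c - 2, Max)]) @ [(a, Min b)] @ q') []"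
              apply (rule Cons.IH[OF qm, rule_format]) using clp ty len W E_typed[OF calculation] by (auto simp: cl_def)
            ultimately show ?thesis using W by (simp add: rtranclp_trans)
          next
            case 5
            have r: "typed xs [(c, Max), (a - 2, Min b)] = Some ys" using ic_l[of c Max a xs "Min b" ys] l 5 by simp
            have rl: "rv_local [(a, Min b), (c, Max)] [(c, Max), (a - 2, Min b)]"
              using rv_local.interchange_l[of c Max a "Min b"] 5 by simp
            have "E [] (p @ [(a, Min b), (c, Max)] @ q') (p @ [(c, Max), (a - 2, Min b)] @ q')"
              using E_in[OF xs l r] rl cob_local.rv by blast
            moreover have "E [] ((p @ [(c, Max)]) @ [(a - 2, Min b)] @ q') []"
              apply (rule Cons.IH[OF qm, rule_format]) using clp ty len W E_typed[OF calculation] by (auto simp: cl_def)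
            ultimately show ?thesis using W by (simp add: rtranclp_trans)
          qed
        qed
      qed
    qed
    then show ?thesis using D less.prems by auto
  qed
qed


lemma E1: "typed x0 p = Some xs \<Longrightarrow> typed xs l = typed xs r \<Longrightarrow> typed xs l \<noteq> None \<Longrightarrow>
   cob_local l r \<or> cob_local r l \<Longrightarrow> E x0 (p@l@q) (p@r@q)"
  using E_in by fastforce

lemma flipc_flipc[simp]: "flipc (flipc t) = t" by (cases t) auto
lemma flipc_nv: "t \<noteq> Virt \<Longrightarrow> flipc t \<noteq> Virt" by (cases t) auto

lemma cross_cl_opp: assumes "t \<noteq> Virt" shows "E [a, \<not>a] [(0,Cr t)] [(0,Max),(0,Min (\<not>a))]"
proof -
  have s1: "E [a, \<not>a] ([(0,Cr t)]@[]@[]) ([(0,Cr t)]@[(0,Max),(0,Min (\<not>a))]@[])"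
    by (rule E1) (auto intro: cob_local.saddle)
  have s2: "E [a, \<not>a] ([]@[(0,Cr t)]@[(0,Max),(0,Min (\<not>a))]) ([]@[(2,Min (\<not>a)),(1,Cr (flipc t)),(0,Max)]@[(0,Max),(0,Min (\<not>a))])"
    apply (rule E1) apply auto
    using rv_local.rotate1[of 0 "\<not>a" "flipc t"] cob_local.rv by (auto simp: numeral_2_eq_2)
  have s3: "E [a, \<not>a] ([(2,Min (\<not>a)),(1,Cr (flipc t))]@[(0,Max),(0,Max)]@[(0,Min (\<not>a))]) ([(2,Min (\<not>a)),(1,Cr (flipc t))]@[(2,Max),(0,Max)]@[(0,Min (\<not>a))])"
    apply (rule E1) apply auto
    using rv_local.interchange_r[of 0 Max 0 Max] cob_local.rv by (auto simp: numeral_2_eq_2)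
  have s4: "E [a, \<not>a] ([]@[(2,Min (\<not>a)),(1,Cr (flipc t)),(2,Max)]@[(0,Max),(0,Min (\<not>a))]) ([]@[]@[(0,Max),(0,Min (\<not>a))])"
    apply (rule E1) apply auto
    using rv_local.R1a[of "flipc t" 1 "\<not>a"] flipc_nv[OF assms] cob_local.rv by (auto simp: numeral_2_eq_2)
  show ?thesis using s1 s2 s3 s4 by auto
qed


lemma cross_cl_same: assumes "t \<noteq> Virt"
  shows "E [a, a] [(0,Cr t)] ([(2,Min (\<not>a))] @ [(1,Max),(1,Min (\<not>a))] @ [(0,Max)])"
proof -
  have s1: "E [a, a] ([]@[(0,Cr t)]@[]) ([]@[(2,Min (\<not>a)),(1,Cr (flipc t)),(0,Max)]@[])"
    apply (rule E1) apply auto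
    using rv_local.rotate1[of 0 "\<not>a" "flipc t"] cob_local.rv by (auto simp: numeral_2_eq_2)
  have "E ([a]@[a, \<not>a]@[a]) (shift (length [a]) [(0,Cr (flipc t))]) (shift (length [a]) [(0,Max),(0,Min (\<not>a))])"
    using E_shift cross_cl_opp flipc_nv[OF assms] by blast
  then have "E [a,a,\<not>a,a] [(1,Cr (flipc t))] [(1,Max),(1,Min (\<not>a))]" by simp
  then have s2: "E [a,a] ([(2,Min (\<not>a))] @ [(1,Cr (flipc t))] @ [(0,Max)]) ([(2,Min (\<not>a))] @ [(1,Max),(1,Min (\<not>a))] @ [(0,Max)])"
    by (rule E_ctx) (simp add: numeral_2_eq_2)
  show ?thesis using s1 s2 by auto
qed

lemma split2: assumes "k + 2 \<le> length xs" shows "\<exists>L x y R. xs = L@[x,y]@R \<and> length L = k"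
proof -
  obtain L M R where "xs = L@M@R" "length L = k" "length M = 2" using split3[OF assms] by blast
  then show ?thesis using len2[of M] by blast
qed

lemma cross_cl: assumes "t \<noteq> Virt" "k + 2 \<le> length xs" shows "\<exists>w. cl w \<and> E xs [(k,Cr t)] w"
proof -
  obtain L x y R where xs: "xs = L@[x,y]@R" "length L = k" using split2[OF assms(2)] by blast
  show ?thesis
  proof (cases "y = x")
    case True
    have "E (L@[x,x]@R) (shift (length L) [(0,Cr t)]) (shift (length L) ([(2,Min (\<not>x))] @ [(1,Max),(1,Min (\<not>x))] @ [(0,Max)]))"
      using E_shift cross_cl_same[OF assms(1)] by blast
    then show ?thesis using xs True
      by (intro exI[of _ "shift (length L) ([(2,Min (\<not>x))] @ [(1,Max),(1,Min (\<not>x))] @ [(0,Max)])"]) auto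
  next
    case False
    then have y: "y = (\<not>x)" by auto
    have "E (L@[x,\<not>x]@R) (shift (length L) [(0,Cr t)]) (shift (length L) [(0,Max),(0,Min (\<not>x))])"
      using E_shift cross_cl_opp[OF assms(1)] by blast
    then show ?thesis using xs y
      by (intro exI[of _ "shift (length L) [(0,Max),(0,Min (\<not>x))]"]) auto
  qed
qed


definition V :: "nat \<Rightarrow> bool \<Rightarrow> mword" where "V p b = [(p,Min b),(p,Cr Virt),(p,Max)]"

lemma typed_V: assumes "k \<le> length xs" shows "typed xs (V k b) = Some xs"
proof -
  obtain A Z where xs: "xs = A@Z" "length A = k" using split3[of k 0 xs] assms by auto
  have 1: "apply_slice (A@[]@Z) (k, Min b) = Some (A@[b,\<not>b]@Z)" using apply_slice_at[OF xs(2), of "[]" "Min b" Z] by simp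
  have 2: "apply_slice (A@[b,\<not>b]@Z) (k, Cr Virt) = Some (A@[\<not>b,b]@Z)" using apply_slice_at[OF xs(2), of "[b,\<not>b]" "Cr Virt" Z] by simp
  have 3: "apply_slice (A@[\<not>b,b]@Z) (k, Max) = Some (A@[]@Z)" using apply_slice_at[OF xs(2), of "[\<not>b,b]" "Max" Z] by simp
  show ?thesis using 1 2 3 xs by (simp add: V_def)
qed

lemma cl_V[simp]: "\<not> cl (V k b)" by (simp add: V_def)

lemma vopp_local: "E [a, \<not>a] [(0,Cr Virt)] ([(0,Max)] @ V 0 a @ [(0,Min (\<not>a))])"
proof -
  have s1: "E [a, \<not>a] ([]@[]@[(0,Cr Virt)]) ([]@[(0,Max),(0,Min a)]@[(0,Cr Virt)])"
    by (rule E1) (auto intro: cob_local.saddle)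
  have s2: "E [a, \<not>a] ([(0,Max),(0,Min a),(0,Cr Virt)]@[]@[]) ([(0,Max),(0,Min a),(0,Cr Virt)]@[(0,Max),(0,Min (\<not>a))]@[])"
    by (rule E1) (auto intro: cob_local.saddle)
  show ?thesis using s1 s2 by (auto simp: V_def)
qed

lemma vmove_local: "E [s] (V 1 b) (V 0 b)"
proof -
  have s1: "E [s] ([]@[(1,Min b)]@[(1,Cr Virt),(1,Max)]) ([]@[(0,Min b),(1,Cr Virt),(0,Cr Virt)]@[(1,Cr Virt),(1,Max)])"
    apply (rule E1) apply auto
    using rv_local.slide_min2[of 0 b Virt] cob_local.rv by (auto simp: numeral_2_eq_2)
  have s2: "E [s] ([(0,Min b),(1,Cr Virt),(0,Cr Virt),(1,Cr Virt)]@[(1,Max)]@[]) ([(0,Min b),(1,Cr Virt),(0,Cr Virt),(1,Cr Virt)]@[(0,Cr Virt),(1,Cr Virt),(0,Max)]@[])"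
    apply (rule E1) apply auto
    using rv_local.slide_max2[of 0 Virt] cob_local.rv by (auto simp: numeral_2_eq_2)
  have s3: "E [s] ([(0,Min b),(1,Cr Virt)]@[(0,Cr Virt),(1,Cr Virt),(0,Cr Virt)]@[(1,Cr Virt),(0,Max)]) ([(0,Min b),(1,Cr Virt)]@[(1,Cr Virt),(0,Cr Virt),(1,Cr Virt)]@[(1,Cr Virt),(0,Max)])"
    apply (rule E1) apply auto
    using rv_local.R3[of 0 Virt] cob_local.rv by (auto simp: numeral_2_eq_2)
  have s4: "E [s] ([(0,Min b)]@[(1,Cr Virt),(1,Cr Virt)]@[(0,Cr Virt),(1,Cr Virt),(1,Cr Virt),(0,Max)]) ([(0,Min b)]@[]@[(0,Cr Virt),(1,Cr Virt),(1,Cr Virt),(0,Max)])"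
    apply (rule E1) apply auto
    using rv_local.VR2[of 1] cob_local.rv by (auto simp: numeral_2_eq_2)
  have s5: "E [s] ([(0,Min b),(0,Cr Virt)]@[(1,Cr Virt),(1,Cr Virt)]@[(0,Max)]) ([(0,Min b),(0,Cr Virt)]@[]@[(0,Max)])"
    apply (rule E1) apply auto
    using rv_local.VR2[of 1] cob_local.rv by (auto simp: numeral_2_eq_2)
  show ?thesis using s1 s2 s3 s4 s5 by (auto simp: V_def)
qed


lemma shift_V[simp]: "shift n (V k b) = V (k+n) b" by (simp add: V_def)

lemma vmove: assumes "m < length ys" shows "E ys (V (Suc m) b) (V m b)"
proof -
  obtain L M R where ys: "ys = L@M@R" "length L = m" "length M = 1" using split3[of m 1 ys] assms by auto
  then obtain s where "M = [s]" by (metis One_nat_def length_0_conv length_Suc_conv)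
  then show ?thesis using E_shift[OF vmove_local[of s b], of L R] ys by simp
qed

lemma vmove0: "k \<le> length ys \<Longrightarrow> E ys (V k b) (V 0 b)"
proof (induction k)
  case 0 then show ?case by simp
next
  case (Suc k) then show ?case using vmove[of k ys b] by (meson Suc_le_lessD less_imp_le_nat rtranclp_trans)
qed

lemma vcomm: assumes "typed xs [(a,g)] = Some ys" shows "E xs ([(a,g)] @ V 0 b) (V 0 b @ [(a,g)])"
proof -
  have as: "apply_slice xs (a,g) = Some ys" using assms by (auto split: option.splits)
  have t1: "typed xs [(a,g),(0,Min b)] = Some (b#(\<not>b)#ys)" using as by simp
  have r1: "typed xs [(0,Min b),(a+2,g)] = Some (b#(\<not>b)#ys)"
    using ic_l[of 0 "Min b" a xs g, OF _ t1] by simp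
  have s1: "E xs ([]@[(a,g),(0,Min b)]@[(0,Cr Virt),(0,Max)]) ([]@[(0,Min b),(a+2,g)]@[(0,Cr Virt),(0,Max)])"
    apply (rule E1) using t1 r1 rv_local.interchange_l[of 0 "Min b" a g] cob_local.rv by auto
  have as2: "apply_slice ([b,\<not>b]@xs@[]) (a+length [b,\<not>b], g) = Some ([b,\<not>b]@ys@[])"
    using apply_slice_shift[OF as] by blast
  have t2: "typed (b#(\<not>b)#xs) [(a+2,g),(0,Cr Virt)] = Some ((\<not>b)#b#ys)" using as2 by simp
  have r2: "typed (b#(\<not>b)#xs) [(0,Cr Virt),(a+2,g)] = Some ((\<not>b)#b#ys)"
    using ic_l[of 0 "Cr Virt" "a+2" "b#(\<not>b)#xs" g, OF _ t2] by simp
  have s2: "E xs ([(0,Min b)]@[(a+2,g),(0,Cr Virt)]@[(0,Max)]) ([(0,Min b)]@[(0,Cr Virt),(a+2,g)]@[(0,Max)])"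
    apply (rule E1) using t2 r2 rv_local.interchange_l[of 0 "Cr Virt" "a+2" g] cob_local.rv by auto
  have as3: "apply_slice ([\<not>b,b]@xs@[]) (a+length [\<not>b,b], g) = Some ([\<not>b,b]@ys@[])"
    using apply_slice_shift[OF as] by blast
  have t3: "typed ((\<not>b)#b#xs) [(a+2,g),(0,Max)] = Some ys" using as3 by simp
  have r3: "typed ((\<not>b)#b#xs) [(0,Max),(a,g)] = Some ys"
    using ic_l[of 0 "Max" "a+2" "(\<not>b)#b#xs" g, OF _ t3] by simp
  have s3: "E xs ([(0,Min b),(0,Cr Virt)]@[(a+2,g),(0,Max)]@[]) ([(0,Min b),(0,Cr Virt)]@[(0,Max),(a,g)]@[])"
    apply (rule E1) using t3 r3 rv_local.interchange_l[of 0 "Max" "a+2" g] cob_local.rv by auto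
  show ?thesis using s1 s2 s3 by (auto simp: V_def)
qed

lemma vcomm_prefix: "typed x0 p = Some xs \<Longrightarrow> E x0 (p @ V 0 b @ q) (V 0 b @ p @ q)"
proof (induction p arbitrary: q xs rule: rev_induct)
  case Nil then show ?case by simp
next
  case (snoc s p)
  obtain a g where s: "s = (a,g)" by fastforce
  from snoc.prems obtain zs where p: "typed x0 p = Some zs" and z: "typed zs [s] = Some xs"
    by (auto simp: typed_append split: option.splits)
  have "E x0 (p @ ([(a,g)] @ V 0 b) @ q) (p @ (V 0 b @ [(a,g)]) @ q)"
    using E_ctx[OF vcomm p] z s by blast
  moreover have "E x0 (p @ V 0 b @ ([(a,g)] @ q)) (V 0 b @ p @ ([(a,g)] @ q))"
    using snoc.IH[OF p] .
  ultimately show ?case using s by (auto elim: rtranclp_trans)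
qed


lemma vopp: assumes "k + 2 \<le> length xs" "xs!(Suc k) = (\<not> xs!k)"
  shows "\<exists>w. cl w \<and> E xs [(k,Cr Virt)] (V 0 (xs!k) @ w)"
proof -
  obtain L x y R where xs: "xs = L@[x,y]@R" "length L = k" using split2[OF assms(1)] by blast
  then have y: "y = (\<not>x)" and xk: "xs!k = x" using assms(2) by (auto simp: nth_append)
  have e1: "E xs [(k,Cr Virt)] ([(k,Max)] @ V k x @ [(k,Min (\<not>x))])"
    using E_shift[OF vopp_local[of x], of L R] xs y by simp
  have tm: "typed xs [(k,Max)] = Some (L@R)"
    using apply_slice_at[OF xs(2), of "[x,y]" Max R] xs y by simp
  have e2: "E xs ([(k,Max)] @ V k x @ [(k,Min (\<not>x))]) ([(k,Max)] @ V 0 x @ [(k,Min (\<not>x))])"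
  proof -
    have mv: "E (L@R) (V k x) (V 0 x)" using vmove0 xs by simp
    show ?thesis using E_ctx[OF mv tm] by simp
  qed
  have e3: "E xs ([(k,Max)] @ V 0 x @ [(k,Min (\<not>x))]) (V 0 x @ [(k,Max)] @ [(k,Min (\<not>x))])"
    using vcomm_prefix[OF tm] .
  show ?thesis using e1 e2 e3 xk
    by (intro exI[of _ "[(k,Max),(k,Min (\<not>x))]"]) (auto elim: rtranclp_trans)
qed

lemma vsame_local: "E [a, a] [(0,Cr Virt)] [(2,Min (\<not>a)),(1,Cr Virt),(0,Max)]"
proof -
  have s1: "E [a, a] ([]@[(0,Cr Virt)]@[]) ([]@[(2,Min (\<not>a)),(1,Cr (flipc Virt)),(0,Max)]@[])"
    apply (rule E1) apply auto
    using rv_local.rotate1[of 0 "\<not>a" "Virt"] cob_local.rv by (auto simp: numeral_2_eq_2)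
  then show ?thesis by simp
qed

lemma vcross: assumes "k + 2 \<le> length xs" shows "\<exists>w. cl w \<and> E xs [(k,Cr Virt)] (V 0 (xs!k) @ w)"
proof -
  obtain L x y R where xs: "xs = L@[x,y]@R" "length L = k" using split2[OF assms(1)] by blast
  then have xk: "xs!k = x" and yk: "xs!(Suc k) = y" by (auto simp: nth_append)
  show ?thesis
  proof (cases "y = x")
    case False
    then show ?thesis using vopp[OF assms] xk yk by auto
  next
    case True
    have e1: "E xs [(k,Cr Virt)] [(k+2,Min (\<not>x)),(k+1,Cr Virt),(k,Max)]"
      using E_shift[OF vsame_local[of x], of L R] xs True by (simp add: ac_simps)
    define xs' where "xs' = L@[x,x,\<not>x,x]@R"
    have tm: "typed xs [(k+2,Min (\<not>x))] = Some xs'"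
      using apply_slice_at[of "L@[x,x]" "k+2" "[]" "Min (\<not>x)" R] xs True xs'_def by simp
    have c1: "Suc k + 2 \<le> length xs'" "xs'!(Suc (Suc k)) = (\<not> xs'!(Suc k))" "xs'!(Suc k) = x"
      using xs xs'_def by (auto simp: nth_append)
    obtain w' where w': "cl w'" "E xs' [(Suc k,Cr Virt)] (V 0 x @ w')" using vopp[OF c1(1) c1(2)] c1(3) by auto
    have e2: "E xs ([(k+2,Min (\<not>x))] @ [(k+1,Cr Virt)] @ [(k,Max)]) ([(k+2,Min (\<not>x))] @ (V 0 x @ w') @ [(k,Max)])"
      using E_ctx[OF w'(2) tm] by simp
    have e3: "E xs ([(k+2,Min (\<not>x))] @ V 0 x @ (w' @ [(k,Max)])) (V 0 x @ [(k+2,Min (\<not>x))] @ (w' @ [(k,Max)]))"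
      using vcomm_prefix[OF tm] .
    show ?thesis using e1 e2 e3 xk w'(1)
      by (intro exI[of _ "[(k+2,Min (\<not>x))] @ w' @ [(k,Max)]"]) (auto elim: rtranclp_trans)
  qed
qed


definition ncr :: "mword \<Rightarrow> nat" where "ncr w = length (filter (\<lambda>s. \<exists>t. snd s = Cr t) w)"

lemma ncr_append[simp]: "ncr (u@v) = ncr u + ncr v" by (simp add: ncr_def)
lemma ncr_cl: "cl w \<Longrightarrow> ncr w = 0" by (auto simp: ncr_def cl_def filter_empty_conv)
lemma ncr_cr[simp]: "ncr [(k, Cr t)] = 1" by (simp add: ncr_def)
lemma not_cl: "\<not> cl D \<Longrightarrow> \<exists>p k t q. D = p @ [(k, Cr t)] @ q"
proof -
  assume "\<not> cl D"
  then obtain s t where "s \<in> set D" "snd s = Cr t" by (auto simp: cl_def)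
  then obtain p q where "D = p @ s # q" by (meson split_list)
  then show ?thesis using \<open>snd s = Cr t\<close> by (metis append_Cons append_Nil prod.collapse)
qed

abbreviation Vs :: "bool list \<Rightarrow> mword" where "Vs bs \<equiv> concat (map (V 0) bs)"

lemma decomp: "typed [] D = Some [] \<Longrightarrow> \<exists>bs D0. cl D0 \<and> E [] D (Vs bs @ D0)"
proof (induction "ncr D" arbitrary: D rule: less_induct)
  case less
  show ?case
  proof (cases "cl D")
    case True then show ?thesis by (intro exI[of _ "[]"] exI[of _ D]) auto
  next
    case False
    then obtain p k t q where D: "D = p @ [(k, Cr t)] @ q" using not_cl by blast
    from less.prems D obtain xs where xs: "typed [] p = Some xs"
      and cr: "typed xs [(k, Cr t)] \<noteq> None"
      by (auto simp: typed_append split: option.splits)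
    have k2: "k + 2 \<le> length xs" using cr by (auto split: if_splits option.splits)
    show ?thesis
    proof (cases "t = Virt")
      case False
      obtain w where w: "cl w" "E xs [(k, Cr t)] w" using cross_cl[OF False k2] by blast
      have e1: "E [] D (p@w@q)" using E_ctx[OF w(2) xs] D by simp
      have ty: "typed [] (p@w@q) = Some []" using E_typed[OF e1] less.prems by simp
      have "ncr (p@w@q) < ncr D" using D ncr_cl[OF w(1)] by (simp add: ncr_def)
      then obtain bs D0 where "cl D0" "E [] (p@w@q) (Vs bs @ D0)" using less.hyps ty by blast
      then show ?thesis using e1 by (intro exI[of _ bs] exI[of _ D0]) (auto elim: rtranclp_trans)
    next
      case True
      obtain w where w: "cl w" "E xs [(k, Cr Virt)] (V 0 (xs!k) @ w)" using vcross[OF k2] by blast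
      have e1: "E [] D (p@(V 0 (xs!k) @ w)@q)" using E_ctx[OF w(2) xs] D True by simp
      have e2: "E [] (p@V 0 (xs!k) @ (w@q)) (V 0 (xs!k) @ p @ (w@q))" using vcomm_prefix[OF xs] .
      have tv: "typed [] (V 0 (xs!k)) = Some []" using typed_V[of 0 "[]"] by simp
      have a1: "typed [] (V 0 (xs!k) @ (p@w@q)) = Some []"
        using E_typed[OF e1] E_typed[OF e2] less.prems by simp
      have ty: "typed [] (p@w@q) = Some []"
        using a1 tv typed_append[of "[]" "V 0 (xs!k)" "p@w@q"] by simp
      have "ncr (p@w@q) < ncr D" using D ncr_cl[OF w(1)] by (simp add: ncr_def)
      then obtain bs D0 where D0: "cl D0" "E [] (p@w@q) (Vs bs @ D0)" using less.hyps ty by blast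
      have e3: "E [] (V 0 (xs!k) @ (p@w@q) @ []) (V 0 (xs!k) @ (Vs bs @ D0) @ [])"
        using E_ctx[OF D0(2) tv] .
      show ?thesis using e1 e2 e3 D0(1)
        by (intro exI[of _ "(xs!k) # bs"] exI[of _ D0]) (auto elim!: rtranclp_trans)
    qed
  qed
qed


lemma typed_V0'[simp]: "typed xs (V 0 b) = Some xs"
  using typed_V[of 0 xs b] by simp

lemma typed_V0[simp]: "typed xs (V 0 b @ w) = typed xs w"
  using typed_V[of 0 xs b] by (simp add: typed_append)

lemma typed_Vs[simp]: "typed xs (Vs bs @ w) = typed xs w"
  by (induction bs) auto

lemma process: assumes "typed [] p = Some xs" "k + 2 \<le> length xs"
  shows "\<exists>w. cl w \<and> E [] (p @ [(k,Cr Virt)] @ q) (V 0 (xs!k) @ p @ w @ q) \<and> typed xs w = typed xs [(k,Cr Virt)]"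
proof -
  obtain w where w: "cl w" "E xs [(k, Cr Virt)] (V 0 (xs!k) @ w)" using vcross[OF assms(2)] by blast
  have e1: "E [] (p @ [(k,Cr Virt)] @ q) (p@(V 0 (xs!k) @ w)@q)" using E_ctx[OF w(2) assms(1)] by simp
  have e2: "E [] (p@V 0 (xs!k) @ (w@q)) (V 0 (xs!k) @ p @ (w@q))" using vcomm_prefix[OF assms(1)] .
  have "typed xs w = typed xs [(k,Cr Virt)]" using E_typed[OF w(2)] by simp
  then show ?thesis using e1 e2 w(1) by (intro exI[of _ w]) (auto elim: rtranclp_trans)
qed

lemma pair_from: assumes "E [] W []" "E [] W (V 0 b1 @ V 0 b2 @ rest)" "cl rest"
  shows "E [] (V 0 b1 @ V 0 b2) []"
proof -
  have "typed [] W = Some []" using E_typed[OF assms(1)] by simp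
  then have "typed [] rest = Some []" using E_typed[OF assms(2)] by simp
  then have r: "E [] rest []" using cl_null assms(3) by blast
  have "E [] ((V 0 b1 @ V 0 b2) @ rest @ []) ((V 0 b1 @ V 0 b2) @ [] @ [])"
    by (rule E_ctx[OF r]) simp
  then have x: "E [] (V 0 b1 @ V 0 b2 @ rest) (V 0 b1 @ V 0 b2)" by simp
  have "E [] (V 0 b1 @ V 0 b2) W" using E_sym[OF rtranclp_trans[OF assms(2) x]] .
  then show ?thesis using assms(1) by (auto elim: rtranclp_trans)
qed

lemma pair_opp: "E [] (V 0 (\<not>b) @ V 0 b) []"
proof -
  define W :: mword where "W = [(0,Min b),(0,Cr Virt),(0,Cr Virt),(0,Max)]"
  have a1: "E [] ([(0,Min b)]@[(0,Cr Virt),(0,Cr Virt)]@[(0,Max)]) ([(0,Min b)]@[]@[(0,Max)])"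
    apply (rule E1) apply auto using rv_local.VR2[of 0] cob_local.rv by auto
  have a2: "E [] ([]@[(0,Min b),(0,Max)]@[]) ([]@[]@[])"
    apply (rule E1) apply auto using cob_local.birth[of 0 b] by auto
  have n: "E [] W []" using a1 a2 W_def by (auto elim: rtranclp_trans)
  obtain w1 where w1: "cl w1" "E [] ([(0,Min b)] @ [(0,Cr Virt)] @ [(0,Cr Virt),(0,Max)])
      (V 0 b @ [(0,Min b)] @ w1 @ [(0,Cr Virt),(0,Max)])" "typed [b,\<not>b] w1 = Some [\<not>b,b]"
    using process[of "[(0,Min b)]" "[b,\<not>b]" 0 "[(0,Cr Virt),(0,Max)]"] by auto
  have tp: "typed [] (V 0 b @ [(0,Min b)] @ w1) = Some [\<not>b,b]" using w1(3) by (simp add: typed_append)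
  obtain w2 where w2: "cl w2" "E [] ((V 0 b @ [(0,Min b)] @ w1) @ [(0,Cr Virt)] @ [(0,Max)])
      (V 0 (\<not>b) @ (V 0 b @ [(0,Min b)] @ w1) @ w2 @ [(0,Max)])"
    using process[OF tp, of 0 "[(0,Max)]"] by auto
  have "E [] W (V 0 (\<not>b) @ V 0 b @ ([(0,Min b)] @ w1 @ w2 @ [(0,Max)]))"
    using w1(2) w2(2) W_def by (auto elim: rtranclp_trans)
  then show ?thesis using pair_from[OF n] w1(1) w2(1) by auto
qed

lemma pair_same: "E [] (V 0 a @ V 0 a) []"
proof -
  define W :: mword where "W = [(0,Min (\<not>a)),(2,Min a),(1,Cr Virt),(1,Cr Virt),(2,Max),(0,Max)]"
  have a1: "E [] ([(0,Min (\<not>a)),(2,Min a)]@[(1,Cr Virt),(1,Cr Virt)]@[(2,Max),(0,Max)]) ([(0,Min (\<not>a)),(2,Min a)]@[]@[(2,Max),(0,Max)])"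
    apply (rule E1) apply (auto simp: numeral_2_eq_2) using rv_local.VR2[of 1] cob_local.rv by auto
  have a2: "E [] [(0,Min (\<not>a)),(2,Min a),(2,Max),(0,Max)] []"
    by (rule cl_null) (auto simp: numeral_2_eq_2)
  have n: "E [] W []" using a1 a2 W_def by (auto elim: rtranclp_trans)
  have tp1: "typed [] [(0,Min (\<not>a)),(2,Min a)] = Some [\<not>a,a,a,\<not>a]" by (simp add: numeral_2_eq_2)
  obtain w1 where w1: "cl w1" "E [] ([(0,Min (\<not>a)),(2,Min a)] @ [(1,Cr Virt)] @ [(1,Cr Virt),(2,Max),(0,Max)])
      (V 0 a @ [(0,Min (\<not>a)),(2,Min a)] @ w1 @ [(1,Cr Virt),(2,Max),(0,Max)])" "typed [\<not>a,a,a,\<not>a] w1 = Some [\<not>a,a,a,\<not>a]"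
    using process[OF tp1, of 1 "[(1,Cr Virt),(2,Max),(0,Max)]"] by auto
  have tp: "typed [] (V 0 a @ [(0,Min (\<not>a)),(2,Min a)] @ w1) = Some [\<not>a,a,a,\<not>a]" using w1(3) tp1 by (simp add: typed_append)
  obtain w2 where w2: "cl w2" "E [] ((V 0 a @ [(0,Min (\<not>a)),(2,Min a)] @ w1) @ [(1,Cr Virt)] @ [(2,Max),(0,Max)])
      (V 0 a @ (V 0 a @ [(0,Min (\<not>a)),(2,Min a)] @ w1) @ w2 @ [(2,Max),(0,Max)])"
    using process[OF tp, of 1 "[(2,Max),(0,Max)]"] by auto
  have "E [] W (V 0 a @ V 0 a @ ([(0,Min (\<not>a)),(2,Min a)] @ w1 @ w2 @ [(2,Max),(0,Max)]))"
    using w1(2) w2(2) W_def by (auto elim: rtranclp_trans)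
  then show ?thesis using pair_from[OF n] w1(1) w2(1) by auto
qed

lemma pair: "E [] (V 0 b1 @ V 0 b2) []"
proof (cases "b2 = b1")
  case True then show ?thesis using pair_same by simp
next
  case False then have "b1 = (\<not>b2)" by auto
  then show ?thesis using pair_opp by simp
qed


lemma in_context_step: "in_context cob_local = step []"
  by (auto simp: fun_eq_iff in_context_def step_def)

lemma nv_V[simp]: "num_virtual (V 0 b) = 1" by (simp add: V_def)
lemma nv_Vs: "num_virtual (Vs bs) = length bs" by (induction bs) auto
lemma nv_cl: "cl w \<Longrightarrow> num_virtual w = 0"
  by (auto simp: num_virtual_def cl_def filter_empty_conv)

lemma Vs_elim: "even (length bs) \<Longrightarrow> E [] (Vs bs @ X) X"
proof (induction bs rule: induct_list012)
  case 1 then show ?case by simp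
next
  case (2 x) then show ?case by simp
next
  case (3 x y zs)
  have "E [] ([] @ (V 0 x @ V 0 y) @ (Vs zs @ X)) ([] @ [] @ (Vs zs @ X))"
    by (rule E_ctx[OF pair]) simp
  then show ?case using 3 by (auto elim: rtranclp_trans)
qed

theorem mainTheorem2:
  assumes "closed_diagram L"
  shows "bounds_rv_surface L \<longleftrightarrow> even (num_virtual L)"
proof
  assume "bounds_rv_surface L"
  then have "E [] L []" by (simp add: bounds_rv_surface_def rv_cobordant_def in_context_step)
  then show "even (num_virtual L)" using E_parity by fastforce
next
  assume ev: "even (num_virtual L)"
  have ty: "typed [] L = Some []" using assms by (simp add: closed_diagram_def)
  obtain bs D0 where D0: "cl D0" "E [] L (Vs bs @ D0)" using decomp[OF ty] by blast
  have "even (length bs)" using E_parity[OF D0(2)] ev nv_Vs nv_cl[OF D0(1)] by simp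
  then have e2: "E [] (Vs bs @ D0) D0" by (rule Vs_elim)
  have "typed [] D0 = Some []" using E_typed[OF D0(2)] ty by simp
  then have "E [] D0 []" using cl_null D0(1) by blast
  then have "E [] L []" using D0(2) e2 by (auto elim: rtranclp_trans)
  then show "bounds_rv_surface L" by (simp add: bounds_rv_surface_def rv_cobordant_def in_context_step)
qed

end
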